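(* Consider a single indivisible item offered by a seller (player $0$) to a finite set $N$ of $n \ge 2$ bidders. After observing the profile of bids $b=(b_1,\dots,b_n)$, with the bids ordered as $b_{(1)}>b_{(2)}>\cdots>b_{(n)}$, the seller (in the non-credible second-price auction) selects a winner $y\in N$ and a price $t_y\in[0,b_y]$; all other bidders pay $0$. The seller's utility is $$u_0 = t_y - c\big(t_y - p(b)\big),$$ where $p(b)=b_{(2)}$ is the price prescribed by the second-price rule and $c:\mathbb{R}\to\mathbb{R}$ is a differentiable convex function that is strictly increasing for $x\ge 0$, strictly decreasing for $x<0$, with $c(0)=0$ and $c'(0)\le 1$. Then, in the symmetric Perfect Bayesian equilibrium in undominated strategies, the seller chooses the winner $$y^*=\{i: b_i=b_{(1)}\}$$ and the price $$t^*_{y}=\min\{b_{(1)},\, b_{(2)}+\gamma\},$$ where $\gamma=[c']^{-1}(1)>0$, i.e. $\gamma>0$ is the point at which $c'(\gamma)=1$.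
   Context: Bidders observe only whether they win and, if they win, their own payment; the seller observes all bids. The restriction $t_y\le b_y$ means the seller can overcharge the winner up to the winner's own bid but no further. The function $c$ is interpreted as the seller's cost of breaking the auction rules. *)

theory Defs
  imports "HOL-Analysis.Analysis"
begin

definition first_bid :: "'a set \<Rightarrow> ('a \<Rightarrow> real) \<Rightarrow> real" where
  "first_bid N b = Max (b ` N)"

definition second_bid :: "'a set \<Rightarrow> ('a \<Rightarrow> real) \<Rightarrow> real" where
  "second_bid N b = Max (b ` N - {first_bid N b})"

definition sp_price :: "'a set \<Rightarrow> ('a \<Rightarrow> real) \<Rightarrow> real" where
  "sp_price N b = second_bid N b"

definition feasible :: "'a set \<Rightarrow> ('a \<Rightarrow> real) \<Rightarrow> 'a \<Rightarrow> real \<Rightarrow> bool" where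
  "feasible N b y t \<longleftrightarrow> y \<in> N \<and> 0 \<le> t \<and> t \<le> b y"

definition seller_utility :: "(real \<Rightarrow> real) \<Rightarrow> 'a set \<Rightarrow> ('a \<Rightarrow> real) \<Rightarrow> real \<Rightarrow> real" where
  "seller_utility c N b t = t - c (t - sp_price N b)"

definition seller_optimal :: "(real \<Rightarrow> real) \<Rightarrow> 'a set \<Rightarrow> ('a \<Rightarrow> real) \<Rightarrow> 'a \<Rightarrow> real \<Rightarrow> bool" where
  "seller_optimal c N b y t \<longleftrightarrow> feasible N b y t \<and>
     (\<forall>y' t'. feasible N b y' t' \<longrightarrow> seller_utility c N b t' \<le> seller_utility c N b t)"

definition gamma :: "(real \<Rightarrow> real) \<Rightarrow> real" where
  "gamma c = (THE x. deriv c x = 1)"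

end

theory Submission
  imports Defs
begin

lemma grad_ineq:
  fixes c :: "real \<Rightarrow> real"
  assumes cv: "convex_on UNIV c" and dif: "\<forall>x. c differentiable (at x)"
  shows "c y \<ge> c x + deriv c x * (y - x)"
proof -
  define D where "D = deriv c x"
  have "DERIV c x :> D" using dif DERIV_deriv_iff_real_differentiable D_def by blast
  hence lim: "((\<lambda>h. (c (x + h) - c x) / h) \<longlongrightarrow> D) (at 0)" by (simp add: DERIV_def)
  have key: "c (x + h) \<le> (1 - h / (y - x)) * c x + (h / (y - x)) * c y"
    if "0 \<le> h / (y - x)" "h / (y - x) \<le> 1" "y \<noteq> x" for h
  proof -
    have "c ((1 - h / (y - x)) *\<^sub>R x + (h / (y - x)) *\<^sub>R y) \<le> (1 - h / (y - x)) * c x + (h / (y - x)) * c y"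
      using convex_onD[OF cv, of "h / (y - x)" x y] that by simp
    moreover have "(1 - h / (y - x)) *\<^sub>R x + (h / (y - x)) *\<^sub>R y = x + h"
    proof -
      have "(1 - h / (y - x)) * x + (h / (y - x)) * y = x + (h / (y - x)) * (y - x)"
        by (simp add: algebra_simps add_divide_distrib diff_divide_distrib)
      also have "\<dots> = x + h" using that by simp
      finally show ?thesis by simp
    qed
    ultimately show ?thesis by simp
  qed
  consider "y = x" | "y > x" | "y < x" by linarith
  then show ?thesis
  proof cases
    case 1 then show ?thesis by simp
  next
    case 2
    have "D \<le> (c y - c x) / (y - x)"
    proof (rule tendsto_upperbound[OF tendsto_mono[OF at_le[OF subset_UNIV[of "{0<..}"]] lim] _ trivial_limit_at_right_real])
      have "\<forall>\<^sub>F h in at 0 within {0<..}. h < y - x"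
        using 2 by (intro eventually_at_rightI[of 0 "y - x"]) auto
      moreover have "\<forall>\<^sub>F h in at 0 within {0<..}. h > 0" by (simp add: eventually_at_filter)
      ultimately show "\<forall>\<^sub>F h in at 0 within {0<..}. (c (x + h) - c x) / h \<le> (c y - c x) / (y - x)"
      proof eventually_elim
        case (elim h)
        have "c (x + h) \<le> (1 - h / (y - x)) * c x + (h / (y - x)) * c y"
          using key[of h] elim 2 by simp
        hence "c (x + h) - c x \<le> h * ((c y - c x) / (y - x))" by (simp add: algebra_simps diff_divide_distrib)
        thus ?case using elim by (simp add: pos_divide_le_eq mult.commute)
      qed
    qed
    then have "D * (y - x) \<le> c y - c x" using 2 by (simp add: pos_le_divide_eq)
    then show ?thesis unfolding D_def by (simp add: algebra_simps)
  next
    case 3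
    have "D \<ge> (c y - c x) / (y - x)"
    proof (rule tendsto_lowerbound[OF tendsto_mono[OF at_le[OF subset_UNIV[of "{..<0}"]] lim] _ trivial_limit_at_left_real])
      have "\<forall>\<^sub>F h in at 0 within {..<0}. h > y - x"
        using 3 by (intro eventually_at_leftI[of "y - x" 0]) auto
      moreover have "\<forall>\<^sub>F h in at 0 within {..<0}. h < 0" by (simp add: eventually_at_filter)
      ultimately show "\<forall>\<^sub>F h in at 0 within {..<0}. (c (x + h) - c x) / h \<ge> (c y - c x) / (y - x)"
      proof eventually_elim
        case (elim h)
        have "c (x + h) \<le> (1 - h / (y - x)) * c x + (h / (y - x)) * c y"
          using key[of h] elim 3 by (simp add: field_simps)
        hence "c (x + h) - c x \<le> h * ((c y - c x) / (y - x))" by (simp add: algebra_simps diff_divide_distrib)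
        thus ?case using elim by (simp add: neg_le_divide_eq mult.commute)
      qed
    qed
    then have "D * (y - x) \<le> c y - c x" using 3 by (simp add: neg_divide_le_eq)
    then show ?thesis unfolding D_def by (simp add: algebra_simps)
  qed
qed


lemma g_mono:
  fixes c :: "real \<Rightarrow> real"
  assumes cv: "convex_on UNIV c" and dif: "\<forall>x. c differentiable (at x)"
    and uq: "\<exists>!x. deriv c x = 1" and G: "deriv c G = 1"
  shows "x < y \<Longrightarrow> y \<le> G \<Longrightarrow> x - c x < y - c y"
    and "G \<le> x \<Longrightarrow> x < y \<Longrightarrow> y - c y < x - c x"
proof -
  note gi = grad_ineq[OF cv dif]
  have neq: "deriv c z \<noteq> 1" if "z \<noteq> G" for z using uq G that by blast
  have lt: "deriv c z < 1" if "z < G" for z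
  proof -
    have "c G \<ge> c z + deriv c z * (G - z)" by (rule gi)
    moreover have "c z \<ge> c G + deriv c G * (z - G)" by (rule gi)
    ultimately have "(deriv c z - 1) * (G - z) \<le> 0" using G by (simp add: algebra_simps)
    hence "deriv c z \<le> 1" using that by (simp add: mult_le_0_iff)
    thus ?thesis using neq that by force
  qed
  have gt: "deriv c z > 1" if "z > G" for z
  proof -
    have "c G \<ge> c z + deriv c z * (G - z)" by (rule gi)
    moreover have "c z \<ge> c G + deriv c G * (z - G)" by (rule gi)
    ultimately have "(deriv c z - 1) * (z - G) \<ge> 0" using G by (simp add: algebra_simps)
    hence "deriv c z \<ge> 1" using that by (simp add: zero_le_mult_iff)
    thus ?thesis using neq that by force
  qed
  have w1: "x - c x \<le> y - c y" if "x < y" "y \<le> G" for x y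
  proof -
    have "c x \<ge> c y + deriv c y * (x - y)" by (rule gi)
    moreover have "deriv c y \<le> 1" using lt[of y] G that by force
    hence "(1 - deriv c y) * (y - x) \<ge> 0" using that by simp
    hence "y - x - deriv c y * y + deriv c y * x \<ge> 0" by (simp add: algebra_simps)
    ultimately show ?thesis by (simp add: algebra_simps)
  qed
  have s1: "x - c x < y - c y" if "x < y" "y < G" for x y
  proof -
    have "c x \<ge> c y + deriv c y * (x - y)" by (rule gi)
    moreover have "deriv c y < 1" using lt[of y] that by force
    hence "(1 - deriv c y) * (y - x) > 0" using that by simp
    hence "y - x - deriv c y * y + deriv c y * x > 0" by (simp add: algebra_simps)
    ultimately show ?thesis by (simp add: algebra_simps)
  qed
  show "x - c x < y - c y" if "x < y" "y \<le> G"
  proof -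
    have a: "x < (x+y)/2" "(x+y)/2 < y" "(x+y)/2 < G" using that by (auto simp: field_simps)
    show ?thesis using s1[OF a(1) a(3)] w1[OF a(2) that(2)] by linarith
  qed
  have w2: "y - c y \<le> x - c x" if "G \<le> x" "x < y" for x y
  proof -
    have "c y \<ge> c x + deriv c x * (y - x)" by (rule gi)
    moreover have "deriv c x \<ge> 1" using gt[of x] G that by force
    hence "(deriv c x - 1) * (y - x) \<ge> 0" using that by simp
    hence "deriv c x * y - deriv c x * x - y + x \<ge> 0" by (simp add: algebra_simps)
    ultimately show ?thesis by (simp add: algebra_simps)
  qed
  have s2: "y - c y < x - c x" if "G < x" "x < y" for x y
  proof -
    have "c y \<ge> c x + deriv c x * (y - x)" by (rule gi)
    moreover have "deriv c x > 1" using gt[of x] that by force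
    hence "(deriv c x - 1) * (y - x) > 0" using that by simp
    hence "deriv c x * y - deriv c x * x - y + x > 0" by (simp add: algebra_simps)
    ultimately show ?thesis by (simp add: algebra_simps)
  qed
  show "y - c y < x - c x" if "G \<le> x" "x < y"
  proof -
    have a: "x < (x+y)/2" "(x+y)/2 < y" "G < (x+y)/2" using that by (auto simp: field_simps)
    show ?thesis using s2[OF a(3) a(2)] w2[OF that(1) a(1)] by linarith
  qed
qed

theorem proposition1:
  fixes N :: "'a set" and b :: "'a \<Rightarrow> real" and c :: "real \<Rightarrow> real"
  assumes finN: "finite N" and cardN: "card N \<ge> 2"
    and bids_nonneg: "\<forall>i\<in>N. b i \<ge> 0"
    and bids_distinct: "inj_on b N"
    and c_diff: "\<forall>x. c differentiable (at x)"
    and c_convex: "convex_on UNIV c"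
    and c_incr: "strict_mono_on {0..} c"
    and c_decr: "\<forall>x y. x < y \<and> y < 0 \<longrightarrow> c y < c x"
    and c_zero: "c 0 = 0"
    and c_deriv0: "deriv c 0 \<le> 1"
    and gamma_ex: "\<exists>!x. deriv c x = 1"
    and gamma_pos: "gamma c > 0"
  shows "\<forall>y t. seller_optimal c N b y t \<longleftrightarrow>
           (y \<in> N \<and> b y = first_bid N b \<and>
            t = min (first_bid N b) (second_bid N b + gamma c))"
proof -
  define B where "B = first_bid N b"
  define p where "p = second_bid N b"
  define G where "G = gamma c"
  define T where "T = min B (p + G)"
  have dG: "deriv c G = 1" unfolding G_def gamma_def by (rule theI'[OF gamma_ex])
  note gm = g_mono[OF c_convex c_diff gamma_ex dG]
  have Nne: "N \<noteq> {}" using cardN by auto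
  have finI: "finite (b ` N)" using finN by simp
  have B_in: "B \<in> b ` N" unfolding B_def first_bid_def using finI Nne by simp
  have B_ge: "b i \<le> B" if "i \<in> N" for i unfolding B_def first_bid_def using finI that by simp
  have "card (b ` N) \<ge> 2" using cardN card_image[OF bids_distinct] by simp
  moreover have "card (b ` N) \<le> 1" if "b ` N - {B} = {}"
  proof -
    have "b ` N \<subseteq> {B}" using that by blast
    hence "card (b ` N) \<le> card {B}" by (intro card_mono) auto
    thus ?thesis by simp
  qed
  ultimately have "b ` N - {B} \<noteq> {}" by linarith
  moreover have "finite (b ` N - {B})" using finI by simp
  ultimately have p_in: "p \<in> b ` N - {B}"
    unfolding p_def second_bid_def B_def[symmetric] by (intro Max_in) auto
  have p_ge: "b i \<le> p" if "i \<in> N" "b i \<noteq> B" for i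
    unfolding p_def second_bid_def B_def[symmetric] using finI that by (intro Max_ge) auto
  have pB: "p < B" using p_in B_ge by force
  have p0: "p \<ge> 0" using p_in bids_nonneg by auto
  have T0: "0 \<le> T" "T \<le> B" using p0 pB gamma_pos unfolding T_def G_def by auto
  have u: "seller_utility c N b t = (t - p - c (t - p)) + p" for t
    unfolding seller_utility_def sp_price_def p_def by simp
  have claim: "seller_utility c N b t < seller_utility c N b T" if "0 \<le> t" "t \<le> B" "t \<noteq> T" for t
  proof (cases "t < T")
    case True
    then show ?thesis unfolding u using gm(1)[of "t - p" "T - p"] T_def by auto
  next
    case False
    hence "t > T" using that by simp
    hence "T = p + G" using that T_def by auto
    then show ?thesis unfolding u using gm(2)[of "T - p" "t - p"] \<open>t > T\<close> by auto
  qed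
  obtain y0 where y0: "y0 \<in> N" "b y0 = B" using B_in by auto
  show ?thesis
  proof (intro allI iffI)
    fix y t assume opt: "seller_optimal c N b y t"
    hence f: "y \<in> N" "0 \<le> t" "t \<le> b y" unfolding seller_optimal_def feasible_def by auto
    have "feasible N b y0 T" unfolding feasible_def using y0 T0 by auto
    hence "seller_utility c N b T \<le> seller_utility c N b t" using opt unfolding seller_optimal_def by blast
    hence tT: "t = T" using claim[of t] f B_ge[of y] by force
    have "b y = B"
    proof (rule ccontr)
      assume "b y \<noteq> B"
      hence "b y \<le> p" using p_ge f by auto
      moreover have "p < T" using pB gamma_pos unfolding T_def G_def by auto
      ultimately show False using f tT by auto
    qed
    thus "y \<in> N \<and> b y = first_bid N b \<and> t = min (first_bid N b) (second_bid N b + gamma c)"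
      using f tT unfolding T_def B_def p_def G_def by auto
  next
    fix y t assume h: "y \<in> N \<and> b y = first_bid N b \<and> t = min (first_bid N b) (second_bid N b + gamma c)"
    hence tT: "t = T" and yB: "b y = B" and yN: "y \<in> N" unfolding T_def B_def p_def G_def by auto
    show "seller_optimal c N b y t"
      unfolding seller_optimal_def
    proof (intro conjI allI impI)
      show "feasible N b y t" unfolding feasible_def using yN yB tT T0 by auto
      fix y' t' assume "feasible N b y' t'"
      hence "0 \<le> t'" "t' \<le> B" unfolding feasible_def using B_ge by (auto intro: order_trans)
      thus "seller_utility c N b t' \<le> seller_utility c N b t"
        using claim[of t'] tT by (cases "t' = T") auto
    qed
  qed
qed

end
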